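(* Let $\Gamma$ be a group that is nilpotent of class $\le n$, let $S\subseteq\Gamma\setminus\{\mathbb{I}\}$ be a generating set, $G:=\mathrm{Cay}(\Gamma,S)$, and let $r\ge 2^{n+2}$ be an integer. Let $h\in S$ be such that $\{\mathbb{I},h\}$ is an $r$-local $2$-separator of $G$, suppose that $G$ has no $r$-local cutvertex, and suppose that $h$ is not an involution. Then there is no $g\in S$ such that $g$ traverses $\{\mathbb{I},h\}$ at $\mathbb{I}$, the word $gh^2$ strongly traverses $\{\mathbb{I},h\}$, and both words $g^{-1}h^2g^{-1}h^{-1}$ and $ghgh$ are morphemes of $\Gamma$ in $S$.
   Context: Generating sets are closed under inverses; $\mathrm{Cay}(\Gamma,S)$ is the simple graph on $\Gamma$ with edges $\{g,gs\}$. $a\equiv b$ means $a=b$ or $a=b^{-1}$; $\Gamma$ is nilpotent of class $\le n$ if $[g,h]_n=\mathbb{I}$ for all $g\not\equiv h$, where $[g,h]_1=gh^{-1}g^{-1}h$ and $[g,h]_n$ is the reduced form of $g[g,h]_{n-1}^{-1}g^{-1}[g,h]_{n-1}$. Ball $B_r(v)$: subgraph of all vertices and edges on closed walks of length $\le r$ through $v$; $v$ is an $r$-local cutvertex if $B_r(v)-v$ is disconnected. For $X=\{v_0,v_1\}$, $N(X)$ is the set of vertices outside $X$ adjacent to $X$; the connectivity graph $C_r(v_0,v_1)$ has vertex set $N(X)$, $a,b$ adjacent if for some $i$ they lie in the same component of $B_r(v_i)-v_0-v_1$; $X$ is an $r$-local $2$-separator if $C_r(v_0,v_1)$ is disconnected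 and $d_G(v_0,v_1)\le r/2$; the $r$-local components at $X$ are the components of $C_r(v_0,v_1)$. An element $g\in S$ traverses $X$ at $x\in X$ if the vertices $xg^{-1}$ and $xg$ lie in distinct $r$-local components at $X$. A traversal of $X$ is a walk whose ends lie in distinct $r$-local components at $X$ and whose internal vertices all lie in $X$; it is strong if it has exactly two internal vertices. A word $w=a_1\cdots a_k$ in $S$ strongly traverses $X$ if for some vertex $v$ the walk $v,va_1,\ldots,va_1\cdots a_k$ has a subwalk that is a strong traversal of $X$. A morpheme of $\Gamma$ in $S$ is a nonempty word in $S$ evaluating to $\mathbb{I}$ none of whose nonempty proper contiguous subwords evaluates to $\mathbb{I}$. *)

theory Defs
  imports "HOL-Algebra.Generated_Groups"
begin

primrec itcomm :: "('a,'b) monoid_scheme \<Rightarrow> nat \<Rightarrow> 'a \<Rightarrow> 'a \<Rightarrow> 'a" where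
  "itcomm G 0 g h = h"
| "itcomm G (Suc k) g h =
     g \<otimes>\<^bsub>G\<^esub> inv\<^bsub>G\<^esub> (itcomm G k g h) \<otimes>\<^bsub>G\<^esub> inv\<^bsub>G\<^esub> g \<otimes>\<^bsub>G\<^esub> itcomm G k g h"

definition equiv_inv :: "('a,'b) monoid_scheme \<Rightarrow> 'a \<Rightarrow> 'a \<Rightarrow> bool" where
  "equiv_inv G a b \<longleftrightarrow> a = b \<or> a = inv\<^bsub>G\<^esub> b"

definition nilpotent_class_le :: "('a,'b) monoid_scheme \<Rightarrow> nat \<Rightarrow> bool" where
  "nilpotent_class_le G n \<longleftrightarrow>
     (\<forall>g\<in>carrier G. \<forall>h\<in>carrier G. \<not> equiv_inv G g h \<longrightarrow> itcomm G n g h = \<one>\<^bsub>G\<^esub>)"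

definition generating_set :: "('a,'b) monoid_scheme \<Rightarrow> 'a set \<Rightarrow> bool" where
  "generating_set G S \<longleftrightarrow> S \<subseteq> carrier G \<and> (\<forall>s\<in>S. inv\<^bsub>G\<^esub> s \<in> S) \<and> generate G S = carrier G"

definition word_eval :: "('a,'b) monoid_scheme \<Rightarrow> 'a list \<Rightarrow> 'a" where
  "word_eval G w = foldr (\<lambda>x y. x \<otimes>\<^bsub>G\<^esub> y) w \<one>\<^bsub>G\<^esub>"

definition morpheme :: "('a,'b) monoid_scheme \<Rightarrow> 'a set \<Rightarrow> 'a list \<Rightarrow> bool" where
  "morpheme G S w \<longleftrightarrow> w \<noteq> [] \<and> set w \<subseteq> S \<and> word_eval G w = \<one>\<^bsub>G\<^esub> \<and>
     (\<forall>i j. i < j \<and> j \<le> length w \<and> (i, j) \<noteq> (0, length w) \<longrightarrow>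
        word_eval G (take (j - i) (drop i w)) \<noteq> \<one>\<^bsub>G\<^esub>)"

definition cay_adj :: "('a,'b) monoid_scheme \<Rightarrow> 'a set \<Rightarrow> 'a \<Rightarrow> 'a \<Rightarrow> bool" where
  "cay_adj G S x y \<longleftrightarrow> x \<in> carrier G \<and> y \<in> carrier G \<and> (\<exists>s\<in>S. y = x \<otimes>\<^bsub>G\<^esub> s)"

text \<open>A walk is a nonempty vertex list; its length is (number of entries - 1).\<close>
definition is_walk :: "('a,'b) monoid_scheme \<Rightarrow> 'a set \<Rightarrow> 'a list \<Rightarrow> bool" where
  "is_walk G S ws \<longleftrightarrow> ws \<noteq> [] \<and> set ws \<subseteq> carrier G \<and>
     (\<forall>i. Suc i < length ws \<longrightarrow> cay_adj G S (ws ! i) (ws ! Suc i))"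

definition closed_walk_through :: "('a,'b) monoid_scheme \<Rightarrow> 'a set \<Rightarrow> nat \<Rightarrow> 'a \<Rightarrow> 'a list \<Rightarrow> bool" where
  "closed_walk_through G S r v ws \<longleftrightarrow>
     is_walk G S ws \<and> hd ws = last ws \<and> length ws \<le> Suc r \<and> v \<in> set ws"

definition ball_verts :: "('a,'b) monoid_scheme \<Rightarrow> 'a set \<Rightarrow> nat \<Rightarrow> 'a \<Rightarrow> 'a set" where
  "ball_verts G S r v = {u. \<exists>ws. closed_walk_through G S r v ws \<and> u \<in> set ws}"

definition ball_edges :: "('a,'b) monoid_scheme \<Rightarrow> 'a set \<Rightarrow> nat \<Rightarrow> 'a \<Rightarrow> 'a set set" where
  "ball_edges G S r v =
     {{ws ! i, ws ! Suc i} | ws i. closed_walk_through G S r v ws \<and> Suc i < length ws}"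

definition sg_conn :: "'a set \<Rightarrow> 'a set set \<Rightarrow> 'a \<Rightarrow> 'a \<Rightarrow> bool" where
  "sg_conn V E a b \<longleftrightarrow> a \<in> V \<and> b \<in> V \<and>
     (a, b) \<in> {(x, y). {x, y} \<in> E \<and> x \<in> V \<and> y \<in> V}\<^sup>*"

definition sg_disconnected :: "'a set \<Rightarrow> 'a set set \<Rightarrow> bool" where
  "sg_disconnected V E \<longleftrightarrow> (\<exists>a\<in>V. \<exists>b\<in>V. \<not> sg_conn V E a b)"

definition ball_del_verts :: "('a,'b) monoid_scheme \<Rightarrow> 'a set \<Rightarrow> nat \<Rightarrow> 'a \<Rightarrow> 'a set \<Rightarrow> 'a set" where
  "ball_del_verts G S r v X = ball_verts G S r v - X"

definition ball_del_edges :: "('a,'b) monoid_scheme \<Rightarrow> 'a set \<Rightarrow> nat \<Rightarrow> 'a \<Rightarrow> 'a set \<Rightarrow> 'a set set" where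
  "ball_del_edges G S r v X = {e \<in> ball_edges G S r v. e \<inter> X = {}}"

definition local_cutvertex :: "('a,'b) monoid_scheme \<Rightarrow> 'a set \<Rightarrow> nat \<Rightarrow> 'a \<Rightarrow> bool" where
  "local_cutvertex G S r v \<longleftrightarrow> v \<in> carrier G \<and>
     sg_disconnected (ball_del_verts G S r v {v}) (ball_del_edges G S r v {v})"

definition nbhd :: "('a,'b) monoid_scheme \<Rightarrow> 'a set \<Rightarrow> 'a set \<Rightarrow> 'a set" where
  "nbhd G S X = {u \<in> carrier G - X. \<exists>x\<in>X. cay_adj G S x u}"

definition conn_adj :: "('a,'b) monoid_scheme \<Rightarrow> 'a set \<Rightarrow> nat \<Rightarrow> 'a \<Rightarrow> 'a \<Rightarrow> 'a \<Rightarrow> 'a \<Rightarrow> bool" where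
  "conn_adj G S r v0 v1 a b \<longleftrightarrow> a \<in> nbhd G S {v0, v1} \<and> b \<in> nbhd G S {v0, v1} \<and>
     (\<exists>vi\<in>{v0, v1}. sg_conn (ball_del_verts G S r vi {v0, v1}) (ball_del_edges G S r vi {v0, v1}) a b)"

definition same_local_comp :: "('a,'b) monoid_scheme \<Rightarrow> 'a set \<Rightarrow> nat \<Rightarrow> 'a \<Rightarrow> 'a \<Rightarrow> 'a \<Rightarrow> 'a \<Rightarrow> bool" where
  "same_local_comp G S r v0 v1 a b \<longleftrightarrow> a \<in> nbhd G S {v0, v1} \<and> b \<in> nbhd G S {v0, v1} \<and>
     (a, b) \<in> {(x, y). conn_adj G S r v0 v1 x y}\<^sup>*"

definition distinct_local_comps :: "('a,'b) monoid_scheme \<Rightarrow> 'a set \<Rightarrow> nat \<Rightarrow> 'a \<Rightarrow> 'a \<Rightarrow> 'a \<Rightarrow> 'a \<Rightarrow> bool" where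
  "distinct_local_comps G S r v0 v1 a b \<longleftrightarrow> a \<in> nbhd G S {v0, v1} \<and> b \<in> nbhd G S {v0, v1} \<and>
     \<not> same_local_comp G S r v0 v1 a b"

definition local_2sep :: "('a,'b) monoid_scheme \<Rightarrow> 'a set \<Rightarrow> nat \<Rightarrow> 'a \<Rightarrow> 'a \<Rightarrow> bool" where
  "local_2sep G S r v0 v1 \<longleftrightarrow> v0 \<in> carrier G \<and> v1 \<in> carrier G \<and> v0 \<noteq> v1 \<and>
     (\<exists>a\<in>nbhd G S {v0, v1}. \<exists>b\<in>nbhd G S {v0, v1}. \<not> same_local_comp G S r v0 v1 a b) \<and>
     (\<exists>ws. is_walk G S ws \<and> hd ws = v0 \<and> last ws = v1 \<and> 2 * (length ws - 1) \<le> r)"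

definition traverses_at :: "('a,'b) monoid_scheme \<Rightarrow> 'a set \<Rightarrow> nat \<Rightarrow> 'a \<Rightarrow> 'a \<Rightarrow> 'a \<Rightarrow> 'a \<Rightarrow> bool" where
  "traverses_at G S r v0 v1 g x \<longleftrightarrow> g \<in> S \<and> x \<in> {v0, v1} \<and>
     distinct_local_comps G S r v0 v1 (x \<otimes>\<^bsub>G\<^esub> inv\<^bsub>G\<^esub> g) (x \<otimes>\<^bsub>G\<^esub> g)"

definition strong_traversal :: "('a,'b) monoid_scheme \<Rightarrow> 'a set \<Rightarrow> nat \<Rightarrow> 'a \<Rightarrow> 'a \<Rightarrow> 'a list \<Rightarrow> bool" where
  "strong_traversal G S r v0 v1 ws \<longleftrightarrow> is_walk G S ws \<and> length ws = 4 \<and>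
     ws ! 1 \<in> {v0, v1} \<and> ws ! 2 \<in> {v0, v1} \<and>
     distinct_local_comps G S r v0 v1 (ws ! 0) (ws ! 3)"

definition word_walk :: "('a,'b) monoid_scheme \<Rightarrow> 'a \<Rightarrow> 'a list \<Rightarrow> 'a list" where
  "word_walk G v w = map (\<lambda>i. foldl (\<lambda>x y. x \<otimes>\<^bsub>G\<^esub> y) v (take i w)) [0..<Suc (length w)]"

definition strongly_traverses :: "('a,'b) monoid_scheme \<Rightarrow> 'a set \<Rightarrow> nat \<Rightarrow> 'a \<Rightarrow> 'a \<Rightarrow> 'a list \<Rightarrow> bool" where
  "strongly_traverses G S r v0 v1 w \<longleftrightarrow> set w \<subseteq> S \<and>
     (\<exists>v\<in>carrier G. \<exists>i. strong_traversal G S r v0 v1 (take 4 (drop i (word_walk G v w))))"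

end

theory Submission
  imports Defs
begin


context group begin

lemma inv_cancel_l [simp]: "a \<in> carrier G \<Longrightarrow> z \<in> carrier G \<Longrightarrow> inv a \<otimes> (a \<otimes> z) = z"
  by (simp add: m_assoc[symmetric])
lemma inv_cancel_l2 [simp]: "a \<in> carrier G \<Longrightarrow> z \<in> carrier G \<Longrightarrow> a \<otimes> (inv a \<otimes> z) = z"
  by (simp add: m_assoc[symmetric])

lemma conj_pow:
  assumes "a \<in> carrier G" "x \<in> carrier G"
  shows "a \<otimes> x [^] (m::nat) \<otimes> inv a = (a \<otimes> x \<otimes> inv a) [^] m"
proof (induction m)
  case 0 then show ?case using assms by simp
next
  case (Suc m)
  have "a \<otimes> x [^] Suc m \<otimes> inv a = (a \<otimes> x [^] m \<otimes> inv a) \<otimes> (a \<otimes> x \<otimes> inv a)"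
    using assms by (simp add: m_assoc)
  then show ?case using Suc by simp
qed

lemma invol_conj:
  assumes "u \<in> carrier G" "y \<in> carrier G" "u \<otimes> u = \<one>"
  shows "u \<otimes> inv (u \<otimes> inv y \<otimes> inv u \<otimes> y) \<otimes> inv u = u \<otimes> inv y \<otimes> inv u \<otimes> y"
proof -
  have iu: "inv u = u" using assms inv_equality by blast
  show ?thesis using assms by (simp add: iu inv_mult_group m_assoc)
qed

lemma engel_invol:
  assumes "u \<in> carrier G" "y \<in> carrier G" "u \<otimes> u = \<one>"
  shows "itcomm G (Suc k) u y = (u \<otimes> inv y \<otimes> inv u \<otimes> y) [^] (2^k::nat)"
proof (induction k)
  case 0 then show ?case using assms by simp
next
  case (Suc k)
  define c where "c = u \<otimes> inv y \<otimes> inv u \<otimes> y"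
  have cc: "c \<in> carrier G" using assms c_def by simp
  have "u \<otimes> inv (c [^] (2^k::nat)) \<otimes> inv u = (u \<otimes> inv c \<otimes> inv u) [^] (2^k::nat)"
    using conj_pow[of u "inv c" "2^k"] assms cc by (simp add: nat_pow_inv)
  also have "\<dots> = c [^] (2^k::nat)" using invol_conj[OF assms] c_def by simp
  finally have e: "u \<otimes> inv (c [^] (2^k::nat)) \<otimes> inv u = c [^] (2^k::nat)" .
  have "itcomm G (Suc (Suc k)) u y = c [^] (2^k::nat) \<otimes> c [^] (2^k::nat)"
    using Suc e by (simp add: c_def)
  also have "\<dots> = c [^] (2^Suc k::nat)" using cc by (simp add: nat_pow_mult mult_2)
  finally show ?case by (simp add: c_def)
qed

lemma ord3:
  assumes "x \<in> carrier G" "x \<otimes> x \<otimes> x = \<one>" "x [^] (2^m::nat) = \<one>"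
  shows "x = \<one>"
proof -
  have P: "x [^] (2^i::nat) = x \<or> x [^] (2^i::nat) = x \<otimes> x" for i
  proof (induction i)
    case 0 then show ?case using assms by simp
  next
    case (Suc i)
    have "x [^] (2^Suc i::nat) = x [^] (2^i::nat) \<otimes> x [^] (2^i::nat)"
      using assms by (simp add: nat_pow_mult mult_2)
    moreover have "x \<otimes> x \<otimes> (x \<otimes> x) = x" using assms
      by (metis m_assoc m_closed r_one)
    ultimately show ?case using Suc assms by auto
  qed
  have "x = \<one> \<or> x \<otimes> x = \<one>" using P[of m] assms(3) by auto
  moreover have "x \<otimes> x = \<one> \<Longrightarrow> x = \<one>" using assms(2) assms(1) by simp
  ultimately show ?thesis by blast
qed

lemma solve3:
  assumes "a \<in> carrier G" "x \<in> carrier G" "y \<in> carrier G" "z \<in> carrier G"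
    "inv a \<otimes> x \<otimes> y = z"
  shows "x = a \<otimes> z \<otimes> inv y"
  using assms by (metis inv_solve_left' inv_solve_right m_closed inv_closed m_assoc)

end

context group begin

lemma rels:
  assumes g: "g \<in> carrier G" and h: "h \<in> carrier G"
    and R1: "g \<otimes> (h \<otimes> (g \<otimes> h)) = \<one>"
    and R2: "inv g \<otimes> (h \<otimes> (h \<otimes> (inv g \<otimes> inv h))) = \<one>"
  shows "g \<otimes> h \<otimes> g = inv h" "h \<otimes> g \<otimes> h = inv g" "h \<otimes> h = inv h"
    "h \<otimes> h \<otimes> h = \<one>" "(g \<otimes> h) \<otimes> (g \<otimes> h) = \<one>"
proof -
  show 1: "g \<otimes> h \<otimes> g = inv h" using R1 g h by (metis inv_equality m_assoc m_closed)
  have "(h \<otimes> g \<otimes> h) \<otimes> g = \<one>" using R1 g h inv_comm by (metis m_assoc m_closed)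
  then show 2: "h \<otimes> g \<otimes> h = inv g" using g h by (metis inv_equality m_closed)
  have "h \<otimes> (h \<otimes> (inv g \<otimes> inv h)) = g" using R2 g h
    by (metis inv_closed inv_solve_left' m_closed r_one)
  then have "h \<otimes> h = g \<otimes> h \<otimes> g" using g h
    by (metis inv_closed inv_solve_right' m_assoc m_closed)
  then show 3: "h \<otimes> h = inv h" using 1 by simp
  then show "h \<otimes> h \<otimes> h = \<one>" using h by simp
  show "(g \<otimes> h) \<otimes> (g \<otimes> h) = \<one>" using R1 g h by (simp add: m_assoc)
qed

lemma comm_d:
  assumes g: "g \<in> carrier G" and h: "h \<in> carrier G"
    and R1: "g \<otimes> (h \<otimes> (g \<otimes> h)) = \<one>" and h3: "h \<otimes> h = inv h"
    and c: "g \<otimes> h = h \<otimes> g"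
  shows "h \<otimes> inv g \<otimes> inv g = \<one>"
proof -
  have "g \<otimes> g \<otimes> (h \<otimes> h) = \<one>" using R1 c g h by (metis m_assoc m_closed)
  then have "g \<otimes> g = inv (h \<otimes> h)" using g h by (metis inv_equality inv_comm m_closed)
  then have "g \<otimes> g = h" using h3 h by simp
  then show ?thesis using g h by (metis inv_mult_group m_assoc r_inv inv_closed)
qed

end

context group begin

lemma c1_eq:
  assumes g: "g \<in> carrier G" and h: "h \<in> carrier G"
    and hgh: "h \<otimes> g \<otimes> h = inv g" and hh: "h \<otimes> h = inv h"
  shows "(g \<otimes> h) \<otimes> inv h \<otimes> inv (g \<otimes> h) \<otimes> h = g \<otimes> g \<otimes> inv h"
proof -
  have e1: "inv g \<otimes> h = h \<otimes> g \<otimes> inv h"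
    using hgh hh g h by (metis m_assoc m_closed)
  have "inv h \<otimes> inv g \<otimes> h = g \<otimes> inv h"
  proof -
    have "inv h \<otimes> inv g \<otimes> h = inv h \<otimes> (h \<otimes> g \<otimes> inv h)" using e1 g h by (simp add: m_assoc)
    also have "\<dots> = g \<otimes> inv h" using g h by (simp add: m_assoc)
    finally show ?thesis .
  qed
  then show ?thesis using g h by (simp add: m_assoc inv_mult_group)
qed

lemma d_inv:
  assumes g: "g \<in> carrier G" and h: "h \<in> carrier G"
  shows "h \<otimes> inv g \<otimes> inv g = inv (g \<otimes> g \<otimes> inv h)"
  using g h by (simp add: inv_mult_group m_assoc)

lemma pow_comm1:
  assumes "d \<in> carrier G" shows "d [^] (j::nat) \<otimes> d = d \<otimes> d [^] j"
  using assms nat_pow_Suc2 by simp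

lemma notA:
  assumes g: "g \<in> carrier G" and h: "h \<in> carrier G"
    and R1: "g \<otimes> (h \<otimes> (g \<otimes> h)) = \<one>" and hh: "h \<otimes> h = inv h"
    and g1: "g \<noteq> \<one>"
  shows "(h \<otimes> inv g \<otimes> inv g) [^] (j::nat) \<noteq> g"
proof
  define d where "d = h \<otimes> inv g \<otimes> inv g"
  have dc: "d \<in> carrier G" using d_def g h by simp
  assume "(h \<otimes> inv g \<otimes> inv g) [^] j = g"
  then have dj: "d [^] j = g" using d_def by simp
  then have "g \<otimes> d = d \<otimes> g" using pow_comm1[OF dc, of j] by simp
  then have "(g \<otimes> h \<otimes> inv g) \<otimes> inv g = h \<otimes> inv g" using g h d_def by (simp add: m_assoc)
  then have "g \<otimes> h \<otimes> inv g = h" using g h by (simp del: r_inv l_inv)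
  then have "(g \<otimes> h \<otimes> inv g) \<otimes> g = h \<otimes> g" by simp
  then have "g \<otimes> h = h \<otimes> g" using g h by (simp add: m_assoc)
  then have "d = \<one>" using comm_d[OF g h R1 hh] d_def by simp
  then have "g = \<one>" using dj by simp
  then show False using g1 by simp
qed

lemma notC:
  assumes g: "g \<in> carrier G" and h: "h \<in> carrier G"
    and R1: "g \<otimes> (h \<otimes> (g \<otimes> h)) = \<one>" and hh: "h \<otimes> h = inv h"
    and gh: "g \<noteq> h"
  shows "(h \<otimes> inv g \<otimes> inv g) [^] (j::nat) \<noteq> g \<otimes> inv h"
proof
  define d where "d = h \<otimes> inv g \<otimes> inv g"
  have dc: "d \<in> carrier G" using d_def g h by simp
  assume "(h \<otimes> inv g \<otimes> inv g) [^] j = g \<otimes> inv h"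
  then have dj: "d [^] j = g \<otimes> inv h" using d_def by simp
  then have e: "(g \<otimes> inv h) \<otimes> d = d \<otimes> (g \<otimes> inv h)" using pow_comm1[OF dc, of j] by simp
  have l: "(g \<otimes> inv h) \<otimes> d = inv g" using g h d_def by (simp add: m_assoc)
  have r: "d \<otimes> (g \<otimes> inv h) = h \<otimes> inv g \<otimes> inv h" using g h d_def by (simp add: m_assoc)
  have "inv g = h \<otimes> inv g \<otimes> inv h" using e l r by simp
  then have "inv g \<otimes> h = (h \<otimes> inv g \<otimes> inv h) \<otimes> h" by simp
  then have "inv g \<otimes> h = h \<otimes> inv g" using g h by (simp add: m_assoc)
  then have "g \<otimes> (inv g \<otimes> h) \<otimes> g = g \<otimes> (h \<otimes> inv g) \<otimes> g" by simp
  then have "g \<otimes> h = h \<otimes> g" using g h by (simp add: m_assoc)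
  then have "d = \<one>" using comm_d[OF g h R1 hh] d_def by simp
  then have "g \<otimes> inv h = \<one>" using dj by simp
  then have "g = \<one> \<otimes> h" using g h inv_solve_right' by blast
  then have "g = h" using h by simp
  then show False using gh by simp
qed

lemma invol_pow:
  assumes "d \<in> carrier G" "d \<otimes> d = \<one>"
  shows "d [^] (j::nat) = \<one> \<or> d [^] j = d"
proof (induction j)
  case 0 then show ?case by simp
next
  case (Suc j) then show ?case using assms by auto
qed

lemma notB:
  assumes g: "g \<in> carrier G" and h: "h \<in> carrier G"
    and R1: "g \<otimes> (h \<otimes> (g \<otimes> h)) = \<one>" and hh: "h \<otimes> h = inv h"
    and hgh: "h \<otimes> g \<otimes> h = inv g"
    and u1: "g \<otimes> h \<noteq> \<one>"
  shows "(h \<otimes> inv g \<otimes> inv g) [^] (j::nat) \<noteq> g \<otimes> h"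
proof
  define d where "d = h \<otimes> inv g \<otimes> inv g"
  define u where "u = g \<otimes> h"
  define c where "c = u \<otimes> inv h \<otimes> inv u \<otimes> h"
  have uc: "u \<in> carrier G" using u_def g h by simp
  have cc: "c \<in> carrier G" using c_def uc h by simp
  have uu: "u \<otimes> u = \<one>" using R1 g h u_def by (simp add: m_assoc)
  have iu: "inv u = u" using uu uc inv_equality by blast
  have "c = g \<otimes> g \<otimes> inv h" using c1_eq[OF g h hgh hh] c_def u_def by simp
  then have dc': "d = inv c" using d_inv[OF g h] d_def by simp
  have dc: "d \<in> carrier G" using d_def g h by simp
  assume "(h \<otimes> inv g \<otimes> inv g) [^] j = g \<otimes> h"
  then have dj: "d [^] j = u" using d_def u_def by simp
  then have e: "u \<otimes> d = d \<otimes> u" using pow_comm1[OF dc, of j] by simp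
  have "u \<otimes> inv c \<otimes> inv u = c" using invol_conj[OF uc h uu] c_def by simp
  then have "u \<otimes> d \<otimes> u = inv d" using dc' iu cc by simp
  moreover have "u \<otimes> d \<otimes> u = d \<otimes> u \<otimes> u" using e by simp
  moreover have "d \<otimes> u \<otimes> u = d" using uu dc uc by (simp add: m_assoc)
  ultimately have "d = inv d" by simp
  then have "d \<otimes> d = \<one>" using dc by (metis r_inv)
  then have "u = \<one> \<or> u = d" using invol_pow[OF dc] dj by metis
  moreover have "u \<noteq> \<one>" using u1 u_def by simp
  moreover have "u \<noteq> d"
  proof
    assume "u = d"
    then have "u \<otimes> c = \<one>" using dc' cc by simp
    then have "u \<otimes> u \<otimes> inv h \<otimes> inv u \<otimes> h = \<one>" using c_def uc h by (simp add: m_assoc)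
    then have "inv h \<otimes> inv u \<otimes> h = \<one>" using uu uc h by (simp add: m_assoc)
    then have "h \<otimes> (inv h \<otimes> inv u \<otimes> h) \<otimes> inv h = \<one>" using h by simp
    then have "inv u = \<one>" using uc h by (simp add: m_assoc)
    then show False using \<open>u \<noteq> \<one>\<close> uc by simp
  qed
  ultimately show False by simp
qed

end


lemma (in group) main_lemma:
  assumes "nilpotent_class_le G n" and "generating_set G S" and "\<one> \<notin> S"
    and r: "r \<ge> 2 ^ (n + 2)" and hS: "h \<in> S" and gS: "g \<in> S"
    and tr: "traverses_at G S r \<one> h g \<one>"
    and m1: "morpheme G S [inv g, h, h, inv g, inv h]"
    and m2: "morpheme G S [g, h, g, h]"
  shows False
proof -
  have Sc: "S \<subseteq> carrier G" and Sinv: "\<forall>s\<in>S. inv s \<in> S"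
    using assms(2) unfolding generating_set_def by auto
  have g: "g \<in> carrier G" and h: "h \<in> carrier G" using gS hS Sc by auto
  have igS: "inv g \<in> S" using Sinv gS by simp
  have g1: "g \<noteq> \<one>" using gS assms(3) by auto
  have h1: "h \<noteq> \<one>" using hS assms(3) by auto
  have R2: "inv g \<otimes> (h \<otimes> (h \<otimes> (inv g \<otimes> inv h))) = \<one>"
    using m1 g h unfolding morpheme_def word_eval_def by simp
  have R1: "g \<otimes> (h \<otimes> (g \<otimes> h)) = \<one>"
    using m2 g h unfolding morpheme_def word_eval_def by simp
  have sub1: "\<And>i j. i < j \<Longrightarrow> j \<le> 5 \<Longrightarrow> (i,j) \<noteq> (0,5) \<Longrightarrow>
     word_eval G (take (j-i) (drop i [inv g, h, h, inv g, inv h])) \<noteq> \<one>"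
    using m1 unfolding morpheme_def by auto
  have sub2: "\<And>i j. i < j \<Longrightarrow> j \<le> 4 \<Longrightarrow> (i,j) \<noteq> (0,4) \<Longrightarrow>
     word_eval G (take (j-i) (drop i [g, h, g, h])) \<noteq> \<one>"
    using m2 unfolding morpheme_def by auto
  have "inv g \<otimes> h \<noteq> \<one>" using sub1[of 0 2] g h by (simp add: word_eval_def)
  then have gneh: "g \<noteq> h" using h by auto
  have u1: "g \<otimes> h \<noteq> \<one>" using sub2[of 0 2] g h by (simp add: word_eval_def)
  note rl = rels[OF g h R1 R2]
  have hh: "h \<otimes> h = inv h" and hgh: "h \<otimes> g \<otimes> h = inv g" and uu: "(g \<otimes> h) \<otimes> (g \<otimes> h) = \<one>"
    and h3: "h \<otimes> h \<otimes> h = \<one>" using rl by auto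
  have uc: "g \<otimes> h \<in> carrier G" using g h by simp
  have neq1: "g \<otimes> h \<noteq> h" using g h g1 by simp
  have neq2: "g \<otimes> h \<noteq> inv h"
  proof
    assume a: "g \<otimes> h = inv h"
    have "g = (g \<otimes> h) \<otimes> inv h" using g h by (simp add: m_assoc)
    also have "\<dots> = inv h \<otimes> inv h" using a by simp
    also have "\<dots> = inv (h \<otimes> h)" using h by (simp add: inv_mult_group)
    also have "\<dots> = h" using hh h by simp
    finally show False using gneh by simp
  qed
  have nil: "itcomm G n (g \<otimes> h) h = \<one>"
    using assms(1) uc h neq1 neq2 unfolding nilpotent_class_le_def equiv_inv_def by blast
  have "n \<noteq> 0" proof assume "n = 0" then show False using nil h1 by simp qed
  then obtain k where nk: "n = Suc k" by (cases n) auto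
  define d where "d = h \<otimes> inv g \<otimes> inv g"
  have dc: "d \<in> carrier G" using d_def g h by simp
  have c1: "(g \<otimes> h) \<otimes> inv h \<otimes> inv (g \<otimes> h) \<otimes> h = g \<otimes> g \<otimes> inv h"
    using c1_eq[OF g h hgh hh] .
  have "(g \<otimes> g \<otimes> inv h) [^] (2^k::nat) = \<one>"
    using engel_invol[OF uc h uu, of k] nil nk c1 by simp
  then have dN: "d [^] (2^k::nat) = \<one>"
    using d_inv[OF g h] d_def g h nat_pow_inv[of "g \<otimes> g \<otimes> inv h" "2^k"] by simp
  define M where "M = (LEAST m::nat. 0 < m \<and> d [^] m = \<one>)"
  have Mex: "0 < M \<and> d [^] M = \<one>"
    unfolding M_def by (rule LeastI[of _ "2^k"]) (simp add: dN)
  have Mle: "M \<le> 2^k" unfolding M_def by (rule Least_le) (simp add: dN)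
  have Mmin: "\<And>j. 0 < j \<Longrightarrow> j < M \<Longrightarrow> d [^] j \<noteq> \<one>"
    using not_less_Least M_def by blast
  have r3: "3 * M \<le> r"
  proof -
    have "(2::nat) ^ (n + 2) = 8 * 2^k" using nk by simp
    then show ?thesis using Mle r by linarith
  qed
  define t where "t i = (if i mod 3 = 0 then g else if i mod 3 = 1 then \<one> else h)" for i :: nat
  define f where "f i = inv g \<otimes> d [^] (i div 3) \<otimes> t i" for i :: nat
  have tc: "t i \<in> carrier G" for i using t_def g h by simp
  have fc: "f i \<in> carrier G" for i using f_def tc dc g by simp
  have step: "\<exists>s\<in>S. f (Suc i) = f i \<otimes> s" for i
  proof -
    have "i mod 3 = 0 \<or> i mod 3 = 1 \<or> i mod 3 = 2" by arith
    moreover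
    { assume a: "i mod 3 = 0"
      then have "Suc i div 3 = i div 3" "Suc i mod 3 = 1" by presburger+
      then have "f (Suc i) = f i \<otimes> inv g" using a g dc by (simp add: f_def t_def m_assoc)
      then have ?thesis using igS by blast }
    moreover
    { assume a: "i mod 3 = 1"
      then have "Suc i div 3 = i div 3" "Suc i mod 3 = 2" by presburger+
      then have "f (Suc i) = f i \<otimes> h" using a g h dc by (simp add: f_def t_def m_assoc)
      then have ?thesis using hS by blast }
    moreover
    { assume a: "i mod 3 = 2"
      then have "Suc i div 3 = Suc (i div 3)" "Suc i mod 3 = 0" by presburger+
      then have "f (Suc i) = f i \<otimes> inv g" using a g h dc by (simp add: f_def t_def m_assoc d_def)
      then have ?thesis using igS by blast }
    ultimately show ?thesis by metis
  qed
  define ws where "ws = map f [0..<3*M+1]"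
  have wsn: "\<And>i. i < 3*M+1 \<Longrightarrow> ws ! i = f i" unfolding ws_def
    by (simp del: upt_Suc)
  have wsl: "length ws = 3*M+1" unfolding ws_def by simp
  have f0: "f 0 = \<one>" using g by (simp add: f_def t_def)
  have fM: "f (3*M) = \<one>" using g Mex by (simp add: f_def t_def)
  have walk: "is_walk G S ws"
    unfolding is_walk_def cay_adj_def
  proof (intro conjI allI impI)
    show "ws \<noteq> []" unfolding ws_def by simp
    show "set ws \<subseteq> carrier G" unfolding ws_def using fc by auto
  next
    fix i assume "Suc i < length ws"
    then show "ws ! i \<in> carrier G" "ws ! Suc i \<in> carrier G" "\<exists>s\<in>S. ws ! Suc i = ws ! i \<otimes> s"
      using wsn wsl fc step by auto
  qed
  have cw: "closed_walk_through G S r \<one> ws"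
    unfolding closed_walk_through_def
  proof (intro conjI)
    show "is_walk G S ws" by (rule walk)
    have "ws \<noteq> []" using wsl by auto
    then have "hd ws = ws ! 0" by (rule hd_conv_nth)
    moreover have "last ws = ws ! (3*M)" using wsl \<open>ws \<noteq> []\<close> last_conv_nth[of ws] by simp
    ultimately show "hd ws = last ws" using wsn f0 fM by simp
    show "length ws \<le> Suc r" using wsl r3 by simp
    have "ws ! 0 \<in> set ws" using wsl by simp
    then show "\<one> \<in> set ws" using wsn f0 by simp
  qed
  have inball: "\<And>i. i \<le> 3*M \<Longrightarrow> f i \<in> ball_verts G S r \<one>"
  proof -
    fix i assume "i \<le> 3*M"
    then have il: "i < length ws" using wsl by simp
    then have "ws ! i \<in> set ws" by (rule nth_mem)
    moreover have "ws ! i = f i" using il wsl wsn by simp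
    ultimately have "f i \<in> set ws" by simp
    then show "f i \<in> ball_verts G S r \<one>" unfolding ball_verts_def using cw by auto
  qed
  have inedge: "\<And>i. i < 3*M \<Longrightarrow> {f i, f (Suc i)} \<in> ball_edges G S r \<one>"
  proof -
    fix i assume a: "i < 3*M"
    then have "ws ! i = f i" "ws ! Suc i = f (Suc i)" "Suc i < length ws" using wsl wsn by auto
    then show "{f i, f (Suc i)} \<in> ball_edges G S r \<one>" unfolding ball_edges_def using cw by force
  qed
  have notX: "f i \<noteq> \<one> \<and> f i \<noteq> h" if i1: "1 \<le> i" and i2: "i < 3*M" for i
  proof -
    define j where "j = i div 3"
    have jM: "j < M" using i2 j_def by simp
    have dj: "d [^] j \<in> carrier G" using dc by simp
    have A: "d [^] j \<noteq> g" using notA[OF g h R1 hh g1, of j] d_def by simp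
    have B: "d [^] j \<noteq> g \<otimes> h" using notB[OF g h R1 hh hgh u1, of j] d_def by simp
    have C: "d [^] j \<noteq> g \<otimes> inv h" using notC[OF g h R1 hh gneh, of j] d_def by simp
    have fi: "f i = inv g \<otimes> d [^] j \<otimes> t i" using f_def j_def by simp
    have key: "d [^] j = g \<otimes> z \<otimes> inv (t i)" if "f i = z" "z \<in> carrier G" for z
    proof -
      have "inv g \<otimes> d [^] j \<otimes> t i = z" using fi that(1) by simp
      then show ?thesis using solve3[OF g dj tc that(2)] by blast
    qed
    have "i mod 3 = 0 \<or> i mod 3 = 1 \<or> i mod 3 = 2" by arith
    moreover
    { assume a: "i mod 3 = 1"
      then have ti: "t i = \<one>" using t_def by simp
      have "f i \<noteq> \<one>"
      proof
        assume "f i = \<one>"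
        then have "d [^] j = g \<otimes> \<one> \<otimes> inv \<one>" using key[OF _ one_closed] ti by simp
        then show False using A g by simp
      qed
      moreover have "f i \<noteq> h"
      proof
        assume "f i = h"
        then have "d [^] j = g \<otimes> h \<otimes> inv \<one>" using key[OF _ h] ti by simp
        then show False using B g h by simp
      qed
      ultimately have ?thesis by simp }
    moreover
    { assume a: "i mod 3 = 2"
      then have ti: "t i = h" using t_def by simp
      have "f i \<noteq> \<one>"
      proof
        assume "f i = \<one>"
        then have "d [^] j = g \<otimes> \<one> \<otimes> inv h" using key[OF _ one_closed] ti by simp
        then show False using C g h by simp
      qed
      moreover have "f i \<noteq> h"
      proof
        assume "f i = h"
        then have "d [^] j = g \<otimes> h \<otimes> inv h" using key[OF _ h] ti by simp
        then show False using A g h by (simp add: m_assoc)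
      qed
      ultimately have ?thesis by simp }
    moreover
    { assume a: "i mod 3 = 0"
      then have ti: "t i = g" using t_def by simp
      have j0: "0 < j" using a i1 j_def by presburger
      have "f i \<noteq> \<one>"
      proof
        assume "f i = \<one>"
        then have "d [^] j = g \<otimes> \<one> \<otimes> inv g" using key[OF _ one_closed] ti by simp
        then show False using Mmin[OF j0 jM] g by simp
      qed
      moreover have "f i \<noteq> h"
      proof
        assume "f i = h"
        then have x: "d [^] j = g \<otimes> h \<otimes> inv g" using key[OF _ h] ti by simp
        have xc: "g \<otimes> h \<otimes> inv g \<in> carrier G" using g h by simp
        have "(g \<otimes> h \<otimes> inv g) \<otimes> (g \<otimes> h \<otimes> inv g) \<otimes> (g \<otimes> h \<otimes> inv g) = g \<otimes> (h \<otimes> h \<otimes> h) \<otimes> inv g"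
          using g h by (simp add: m_assoc)
        then have x3: "(g \<otimes> h \<otimes> inv g) \<otimes> (g \<otimes> h \<otimes> inv g) \<otimes> (g \<otimes> h \<otimes> inv g) = \<one>"
          using h3 g by simp
        have "(d [^] j) [^] (2^k::nat) = (d [^] (2^k::nat)) [^] j"
          using dc by (simp add: nat_pow_pow mult.commute)
        then have "(g \<otimes> h \<otimes> inv g) [^] (2^k::nat) = \<one>" using x dN by simp
        then have "g \<otimes> h \<otimes> inv g = \<one>" using ord3[OF xc x3] by simp
        then have "inv g \<otimes> (g \<otimes> h \<otimes> inv g) \<otimes> g = \<one>" using g by simp
        then have "h = \<one>" using g h by (simp add: m_assoc)
        then show False using h1 by simp
      qed
      ultimately have ?thesis by simp }
    ultimately show ?thesis by metis
  qed
  define V where "V = ball_del_verts G S r \<one> {\<one>, h}"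
  define E where "E = ball_del_edges G S r \<one> {\<one>, h}"
  have inV: "f i \<in> V" if "1 \<le> i" "i < 3*M" for i
    using inball[of i] notX[OF that] that unfolding V_def ball_del_verts_def by auto
  have inE: "{f i, f (Suc i)} \<in> E" if "1 \<le> i" "Suc i < 3*M" for i
    using inedge[of i] notX[OF that(1)] notX[of "Suc i"] that unfolding E_def ball_del_edges_def by auto
  have conn: "1 \<le> i \<Longrightarrow> i < 3*M \<Longrightarrow> sg_conn V E (f 1) (f i)" for i
  proof (induction i)
    case 0 then show ?case by simp
  next
    case (Suc i)
    show ?case
    proof (cases "i = 0")
      case True
      then show ?thesis using inV[of 1] Suc.prems unfolding sg_conn_def by auto
    next
      case False
      then have "sg_conn V E (f 1) (f i)" using Suc by simp
      moreover have "{f i, f (Suc i)} \<in> E" "f i \<in> V" "f (Suc i) \<in> V"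
        using inE[of i] inV[of i] inV[of "Suc i"] Suc.prems False by auto
      ultimately show ?thesis unfolding sg_conn_def
        by (auto intro: rtrancl_into_rtrancl)
    qed
  qed
  have f1: "f 1 = inv g" using g by (simp add: f_def t_def)
  obtain M' where MM: "M = Suc M'" using Mex by (cases M) auto
  have "3*M - 1 = 3*M' + 2" using MM by simp
  then have e1: "(3*M - 1) div 3 = M'" "(3*M - 1) mod 3 = 2" by presburger+
  have "d [^] M' \<otimes> d = \<one>" using Mex MM by simp
  then have "inv d = d [^] M'" using dc by (simp add: inv_equality)
  then have "d [^] M' = g \<otimes> g \<otimes> inv h" using d_inv[OF g h] d_def g h by simp
  then have fL: "f (3*M - 1) = g" using e1 g h by (simp add: f_def t_def m_assoc)
  have "sg_conn V E (inv g) g" using conn[of "3*M - 1"] MM f1 fL by simp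
  then have ca: "conn_adj G S r \<one> h (inv g) g"
    using tr unfolding conn_adj_def traverses_at_def distinct_local_comps_def V_def E_def
    using g by auto
  then have "same_local_comp G S r \<one> h (inv g) g"
    using tr g unfolding same_local_comp_def traverses_at_def distinct_local_comps_def by auto
  then show False using tr g unfolding traverses_at_def distinct_local_comps_def by simp
qed

theorem proposition7p1:
  fixes G :: "('a, 'b) monoid_scheme" and S :: "'a set" and n r :: nat and h :: 'a
  assumes "group G"
    and "nilpotent_class_le G n"
    and "generating_set G S"
    and "\<one>\<^bsub>G\<^esub> \<notin> S"
    and "r \<ge> 2 ^ (n + 2)"
    and "h \<in> S"
    and "local_2sep G S r \<one>\<^bsub>G\<^esub> h"
    and "\<forall>v\<in>carrier G. \<not> local_cutvertex G S r v"
    and "h \<otimes>\<^bsub>G\<^esub> h \<noteq> \<one>\<^bsub>G\<^esub>"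
  shows "\<not> (\<exists>g\<in>S. traverses_at G S r \<one>\<^bsub>G\<^esub> h g \<one>\<^bsub>G\<^esub>
              \<and> strongly_traverses G S r \<one>\<^bsub>G\<^esub> h [g, h, h]
              \<and> morpheme G S [inv\<^bsub>G\<^esub> g, h, h, inv\<^bsub>G\<^esub> g, inv\<^bsub>G\<^esub> h]
              \<and> morpheme G S [g, h, g, h])"
proof
  assume "\<exists>g\<in>S. traverses_at G S r \<one>\<^bsub>G\<^esub> h g \<one>\<^bsub>G\<^esub>
              \<and> strongly_traverses G S r \<one>\<^bsub>G\<^esub> h [g, h, h]
              \<and> morpheme G S [inv\<^bsub>G\<^esub> g, h, h, inv\<^bsub>G\<^esub> g, inv\<^bsub>G\<^esub> h]
              \<and> morpheme G S [g, h, g, h]"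
  then obtain g where "g \<in> S" and "traverses_at G S r \<one>\<^bsub>G\<^esub> h g \<one>\<^bsub>G\<^esub>"
    and "morpheme G S [inv\<^bsub>G\<^esub> g, h, h, inv\<^bsub>G\<^esub> g, inv\<^bsub>G\<^esub> h]"
    and "morpheme G S [g, h, g, h]" by blast
  then show False using group.main_lemma[OF assms(1) assms(2) assms(3) assms(4) assms(5) assms(6)] by blast
qed

end
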